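(* Let $\mathbb D$ be a commutative ring with identity, and let $S\mathcal R=S\mathcal R(\mathbb D)$ be the S-Riordan group over $\mathbb D$. For $k\ge 1$ and $\alpha\in\mathbb D$ let $a_k(\alpha)=(1+\alpha t^k,\,t)\in S\mathcal R$. Then for every $\alpha\in\mathbb D$ and every integer $k\ge 2$, $a_k(\alpha)\in\gamma_2(S\mathcal R)$. Moreover, for every $n\ge 1$ and every $\alpha\in\mathbb D$ with $\alpha\neq 0$, the truncation of $a_1(\alpha)$ to $TS\mathcal R_n$ does not lie in $\gamma_2(TS\mathcal R_n)$.
   Context: For a commutative ring $\mathbb D$ with identity, the Riordan group $\mathcal R(\mathbb D)$ consists of pairs $(g,f)$ of formal power series $g=\sum_{k\ge0}g_kt^k$, $f=\sum_{k\ge1}f_kt^k$ in $\mathbb D[[t]]$ with $g_0,f_1$ units, identified with the infinite lower triangular matrices $(d_{n,k})_{n,k\ge0}$, $d_{n,k}=[t^n]g(t)f(t)^k$; the product is matrix multiplication, i.e. $(g_1,f_1)(g_2,f_2)=(g_1\cdot(g_2\circ f_1),\,f_2\circ f_1)$, with identity $(1,t)$. The S-Riordan group $S\mathcal R(\mathbb D)$ is the subgroup of pairs with $g_0=1$ and $f_1=1$ (all 1s on the main diagonal). For $n\ge0$, $TS\mathcal R_n$ denotes the group of $(n+1)\times(n+1)$ matrices $(d_{i,j})_{0\le i,j\le n}$ obtained by truncating the elements of $S\mathcal R(\mathbb D)$ (the image of the truncation homomorphism). Here $\gamma_2(G)$ denotes the commutator subgroup of $G$ (generated by commutators $[x,y]=x^{-1}y^{-1}xy$).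 *)

theory Defs
  imports "HOL-Computational_Algebra.Formal_Power_Series" "HOL-Algebra.Algebra"
begin

definition SRiordan :: "('a::comm_ring_1 fps \<times> 'a fps) monoid" where
  "SRiordan = \<lparr> carrier = {(g, f). fps_nth g 0 = 1 \<and> fps_nth f 0 = 0 \<and> fps_nth f 1 = 1},
               mult = (\<lambda>(g1, f1) (g2, f2). (g1 * fps_compose g2 f1, fps_compose f2 f1)),
               one = (1, fps_X) \<rparr>"

definition riordan_entry :: "'a::comm_ring_1 fps \<times> 'a fps \<Rightarrow> nat \<Rightarrow> nat \<Rightarrow> 'a" where
  "riordan_entry p i j = fps_nth (fst p * snd p ^ j) i"

text \<open>(n+1)x(n+1) matrices indexed by 0..n, represented as functions, zero outside.\<close>
definition truncate_riordan :: "nat \<Rightarrow> 'a::comm_ring_1 fps \<times> 'a fps \<Rightarrow> nat \<Rightarrow> nat \<Rightarrow> 'a" where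
  "truncate_riordan n p = (\<lambda>i j. if i \<le> n \<and> j \<le> n then riordan_entry p i j else 0)"

definition TSRiordan :: "nat \<Rightarrow> (nat \<Rightarrow> nat \<Rightarrow> 'a::comm_ring_1) monoid" where
  "TSRiordan n = \<lparr> carrier = truncate_riordan n ` carrier SRiordan,
     mult = (\<lambda>A B i j. if i \<le> n \<and> j \<le> n then (\<Sum>k\<le>n. A i k * B k j) else 0),
     one = (\<lambda>i j. if i = j \<and> i \<le> n then 1 else 0) \<rparr>"

definition a_elem :: "nat \<Rightarrow> 'a::comm_ring_1 \<Rightarrow> 'a fps \<times> 'a fps" where
  "a_elem k \<alpha> = (1 + fps_const \<alpha> * fps_X ^ k, fps_X)"

end

theory Submission
  imports Defs
begin

unbundle fps_syntax


lemma pz: "c$0 = (0::'a::comm_ring_1) \<Longrightarrow> x < k \<Longrightarrow> (c^k)$x = 0"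
  using startsby_zero_power_prefix by blast

lemma my_product_composition_lemma:
  assumes c0: "c$0 = (0::'a::comm_ring_1)"
    and d0: "d$0 = 0"
  shows "((a oo c) * (b oo d))$n =
    sum (\<lambda>(k,m). a$k * b$m * (c^k * d^m) $ n) {(k,m). k + m \<le> n}"  (is "?l = ?r")
proof -
  let ?S = "{(k::nat, m::nat). k + m \<le> n}"
  have s: "?S \<subseteq> {0..n} \<times> {0..n}" by (simp add: subset_eq)
  have f: "finite {(k::nat, m::nat). k + m \<le> n}"
    by (auto intro: finite_subset[OF s])
  have "?r = (\<Sum>(k, m) \<in> {(k, m). k + m \<le> n}. \<Sum>j = 0..n. a $ k * b $ m * (c ^ k $ j * d ^ m $ (n - j)))"
    by (simp add: fps_mult_nth sum_distrib_left)
  also have "\<dots> = (\<Sum>i = 0..n. \<Sum>(k,m)\<in>{(k,m). k+m \<le> n}. a $ k * c ^ k $ i * b $ m * d ^ m $ (n-i))"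
    unfolding sum.swap [where A = "{0..n}"] by (auto simp add: algebra_simps intro: sum.cong)
  also have "... = (\<Sum>i = 0..n.
                    \<Sum>q = 0..i. \<Sum>j = 0..n - i. a $ q * c ^ q $ i * (b $ j * d ^ j $ (n - i)))"
    apply (rule sum.cong [OF refl])
    apply (simp add: sum.cartesian_product mult.assoc)
    apply (rule sum.mono_neutral_right[OF f], force)
    by (clarsimp; rule ccontr; auto simp add: not_le pz[OF c0] pz[OF d0])
  also have "\<dots> = ?l"
    by (simp add: fps_mult_nth fps_compose_nth sum_product)
  finally show ?thesis by simp
qed

lemma my_mult_distrib:
  assumes c0: "c $ 0 = (0::'a::comm_ring_1)"
  shows "(a * b) oo c = (a oo c) * (b oo c)"
proof (clarsimp simp add: fps_eq_iff)
  fix n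
  have "((a oo c) * (b oo c))$n = sum (\<lambda>s. sum (\<lambda>i. a$i * b$(s - i) * (c^s) $ n) {0..s}) {0..n}"
    unfolding my_product_composition_lemma[OF c0 c0] power_add[symmetric]
    unfolding sum_pair_less_iff[where a = "\<lambda>k. a$k" and b="\<lambda>m. b$m" and c="\<lambda>s. (c ^ s)$n" and n = n] ..
  moreover have "(a * b oo c) $ n = (\<Sum>s = 0..n. \<Sum>i = 0..s. a $ i * b $ (s - i) * c ^ s $ n)"
    by (simp add: fps_compose_nth fps_mult_nth sum_distrib_right)
  ultimately show "(a * b oo c) $ n = ((a oo c) * (b oo c)) $ n" by simp
qed

lemma my_power:
  assumes c0: "c$0 = (0::'a::comm_ring_1)"
  shows "(a oo c)^n = a^n oo c"
  by (induction n) (simp_all add: my_mult_distrib[OF c0])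

lemma my_assoc:
  assumes c0: "c$0 = (0::'a::comm_ring_1)"
    and b0: "b$0 = 0"
  shows "a oo (b oo c) = a oo b oo c" (is "?l = ?r")
proof -
  have "?l$n = ?r$n" for n
  proof -
    have "?l$n = (\<Sum>i=0..n. a$i * (b^i oo c)$n)"
      by (simp only: fps_compose_nth my_power[OF c0])
    also have "\<dots> = (sum (\<lambda>i. (fps_const (a$i) * b^i) oo c) {0..n})$n"
      by (simp add: fps_sum_nth my_mult_distrib[OF c0] fps_mult_left_const_nth)
    also have "\<dots> = ((sum (\<lambda>i. fps_const (a$i) * b^i) {0..n}) oo c)$n"
      by (simp add: fps_compose_sum_distrib)
    also have "... = (\<Sum>i = 0..n. \<Sum>j = 0..n. a $ j * (b ^ j $ i * c ^ i $ n))"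
      by (simp add: fps_compose_nth fps_sum_nth sum_distrib_right mult.assoc)
    also have "... = (\<Sum>i = 0..n. \<Sum>j = 0..i. a $ j * (b ^ j $ i * c ^ i $ n))"
      by (intro sum.cong [OF refl] sum.mono_neutral_right; simp add: b0 startsby_zero_power_prefix)
    also have "\<dots> = ?r$n"
      by (simp add: fps_compose_nth  sum_distrib_right mult.assoc)
    finally show ?thesis .
  qed
  then show ?thesis
    by (simp add: fps_eq_iff)
qed

fun cinv :: "'a::comm_ring_1 fps \<Rightarrow> nat \<Rightarrow> 'a" where
  "cinv a 0 = 0"
| "cinv a (Suc n) = fps_X $ Suc n - sum (\<lambda>i. cinv a i * (a^i) $ Suc n) {0..n}"

lemma cinv_left:
  fixes a :: "'a::comm_ring_1 fps"
  assumes a0: "a$0 = 0" and a1: "a$1 = 1"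
  shows "Abs_fps (cinv a) oo a = fps_X"
proof -
  let ?i = "Abs_fps (cinv a) oo a"
  have "?i $n = fps_X$n" for n
  proof (cases n)
    case 0
    then show ?thesis by (simp add: fps_compose_nth)
  next
    case (Suc n1)
    have "?i $ n = sum (\<lambda>i. cinv a i * (a^i)$n) {0 .. n1} + cinv a (Suc n1) * (a $ 1)^ Suc n1"
      by (simp only: fps_compose_nth) (simp add: Suc startsby_zero_power_nth_same [OF a0] del: power_Suc cinv.simps)
    also have "\<dots> = fps_X$n" using Suc a1 by simp
    finally show ?thesis .
  qed
  then show ?thesis
    by (simp add: fps_eq_iff)
qed

lemma cinv_01: "Abs_fps (cinv a) $ 0 = 0" "Abs_fps (cinv a) $ 1 = 1"
  by simp_all



lemma SR_mult: "(g1,f1) \<otimes>\<^bsub>SRiordan\<^esub> (g2,f2) = (g1 * (g2 oo f1), f2 oo f1)"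
  by (simp add: SRiordan_def)

lemma SR_one: "\<one>\<^bsub>SRiordan\<^esub> = (1, fps_X)"
  by (simp add: SRiordan_def)

lemma SR_carrier: "(g,f) \<in> carrier SRiordan \<longleftrightarrow> g$0 = 1 \<and> f$0 = 0 \<and> f$1 = 1"
  by (simp add: SRiordan_def)

lemma comp_nth1: "f$0 = 0 \<Longrightarrow> (g oo f)$1 = g$1 * f$1"
proof -
  assume "f$0 = 0"
  have "{0..1::nat} = {0,1}" by auto
  then show ?thesis by (simp add: fps_compose_nth)
qed

lemma comp_nth1': "f$0 = 0 \<Longrightarrow> (g oo f)$Suc 0 = g$Suc 0 * f$Suc 0"
  using comp_nth1 by simp

lemma mult_nth1: "(g * h)$1 = g$0 * h$1 + g$1 * h$0"
proof -
  have "{0..1::nat} = {0,1}" by auto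
  then show ?thesis by (simp add: fps_mult_nth)
qed

lemma SR_group: "group (SRiordan :: ('a::comm_ring_1 fps \<times> 'a fps) monoid)"
proof (rule groupI)
  fix x y :: "'a fps \<times> 'a fps"
  assume x: "x \<in> carrier SRiordan" and y: "y \<in> carrier SRiordan"
  obtain g1 f1 where x1: "x = (g1,f1)" by (cases x)
  obtain g2 f2 where y1: "y = (g2,f2)" by (cases y)
  show "x \<otimes>\<^bsub>SRiordan\<^esub> y \<in> carrier SRiordan"
    using x y unfolding x1 y1 SR_mult SR_carrier
    by (simp add: comp_nth1')
next
  show "\<one>\<^bsub>SRiordan\<^esub> \<in> carrier (SRiordan :: ('a::comm_ring_1 fps \<times> 'a fps) monoid)"
    by (simp add: SR_one SR_carrier)
next
  fix x y z :: "'a fps \<times> 'a fps"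
  assume x: "x \<in> carrier SRiordan" and y: "y \<in> carrier SRiordan" and z: "z \<in> carrier SRiordan"
  obtain g1 f1 where x1: "x = (g1,f1)" by (cases x)
  obtain g2 f2 where y1: "y = (g2,f2)" by (cases y)
  obtain g3 f3 where z1: "z = (g3,f3)" by (cases z)
  have f0: "f1$0 = 0" "f2$0 = 0" using x y by (simp_all add: x1 y1 SR_carrier)
  show "x \<otimes>\<^bsub>SRiordan\<^esub> y \<otimes>\<^bsub>SRiordan\<^esub> z = x \<otimes>\<^bsub>SRiordan\<^esub> (y \<otimes>\<^bsub>SRiordan\<^esub> z)"
    unfolding x1 y1 z1 SR_mult
    by (simp add: my_assoc f0 my_mult_distrib mult.assoc)
next
  fix x :: "'a fps \<times> 'a fps"
  assume x: "x \<in> carrier SRiordan"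
  obtain g f where x1: "x = (g,f)" by (cases x)
  have f0: "f$0 = 0" "f$1 = 1" "g$0 = 1" using x by (simp_all add: x1 SR_carrier)
  show "\<one>\<^bsub>SRiordan\<^esub> \<otimes>\<^bsub>SRiordan\<^esub> x = x"
    unfolding x1 SR_one SR_mult by simp
  define h where "h = Abs_fps (cinv f)"
  define k where "k = Abs_fps (cinv h)"
  have h01: "h$0 = 0" "h$1 = 1" by (simp_all add: h_def)
  have hf: "h oo f = fps_X" unfolding h_def by (rule cinv_left[OF f0(1,2)])
  have kh: "k oo h = fps_X" unfolding k_def by (rule cinv_left[OF h01])
  have "k = k oo (h oo f)" by (simp add: hf)
  also have "\<dots> = (k oo h) oo f" by (rule my_assoc[OF f0(1) h01(1)])
  also have "\<dots> = f" using f0 by (simp add: kh)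
  finally have kf: "k = f" .
  have fh: "f oo h = fps_X" using kh kf by simp
  define v where "v = fps_left_inverse (g oo h) 1"
  have v1: "v * (g oo h) = 1" unfolding v_def by (rule fps_left_inverse) (simp add: f0)
  have v0: "v$0 = 1" unfolding v_def by simp
  show "\<exists>y\<in>carrier SRiordan. y \<otimes>\<^bsub>SRiordan\<^esub> x = \<one>\<^bsub>SRiordan\<^esub>"
  proof (intro bexI)
    show "(v,h) \<otimes>\<^bsub>SRiordan\<^esub> x = \<one>\<^bsub>SRiordan\<^esub>"
      unfolding x1 SR_mult SR_one using v1 fh by simp
    show "(v,h) \<in> carrier SRiordan" using v0 h01 by (simp add: SR_carrier)
  qed
qed



lemma coeff_local:
  assumes "\<And>j. j \<le> i \<Longrightarrow> a$j = b$j"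
  shows "(g*a)$i = (g*b)$i"
  unfolding fps_mult_nth using assms by (intro sum.cong) auto

lemma key_sum:
  fixes f :: "'a::comm_ring_1 fps"
  assumes f0: "f$0 = 0" and im: "i \<le> m"
  shows "(g * (h oo f))$i = (\<Sum>k=0..m. h$k * (g * f^k)$i)"
proof -
  define S where "S = (\<Sum>k=0..m. fps_const (h$k) * f^k)"
  have "(h oo f)$j = S$j" if j: "j \<le> i" for j
  proof -
    have "(h oo f)$j = (\<Sum>k=0..j. h$k * (f^k)$j)" by (simp add: fps_compose_nth)
    also have "\<dots> = (\<Sum>k=0..m. h$k * (f^k)$j)"
      by (rule sum.mono_neutral_left) (use j im in \<open>auto simp: pz[OF f0]\<close>)
    also have "\<dots> = S$j" by (simp add: S_def fps_sum_nth)
    finally show ?thesis .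
  qed
  then have "(g * (h oo f))$i = (g * S)$i" by (rule coeff_local)
  also have "\<dots> = (\<Sum>k=0..m. (g * (fps_const (h$k) * f^k))$i)"
    by (simp add: S_def sum_distrib_left fps_sum_nth)
  also have "\<dots> = (\<Sum>k=0..m. h$k * (g * f^k)$i)"
    by (intro sum.cong refl) (simp add: mult.left_commute[of g])
  finally show ?thesis .
qed

lemma entry_mult:
  fixes p q :: "'a::comm_ring_1 fps \<times> 'a fps"
  assumes p: "p \<in> carrier SRiordan" and i: "i \<le> n"
  shows "riordan_entry (p \<otimes>\<^bsub>SRiordan\<^esub> q) i j = (\<Sum>k\<le>n. riordan_entry p i k * riordan_entry q k j)"
proof -
  obtain g1 f1 where p1: "p = (g1,f1)" by (cases p)
  obtain g2 f2 where q1: "q = (g2,f2)" by (cases q)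
  have f0: "f1$0 = 0" using p by (simp add: p1 SR_carrier)
  have "riordan_entry (p \<otimes>\<^bsub>SRiordan\<^esub> q) i j = (g1 * (g2 oo f1) * (f2 oo f1)^j)$i"
    by (simp add: p1 q1 SR_mult riordan_entry_def)
  also have "\<dots> = (g1 * ((g2 * f2^j) oo f1))$i"
    by (simp add: my_power[OF f0] my_mult_distrib[OF f0] mult.assoc)
  also have "\<dots> = (\<Sum>k=0..n. (g2 * f2^j)$k * (g1 * f1^k)$i)"
    by (rule key_sum[OF f0 i])
  also have "\<dots> = (\<Sum>k\<le>n. riordan_entry p i k * riordan_entry q k j)"
    by (simp add: atLeast0AtMost p1 q1 riordan_entry_def mult.commute)
  finally show ?thesis .
qed

lemma trunc_mult:
  fixes p q :: "'a::comm_ring_1 fps \<times> 'a fps"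
  assumes p: "p \<in> carrier SRiordan"
  shows "truncate_riordan n (p \<otimes>\<^bsub>SRiordan\<^esub> q) =
         truncate_riordan n p \<otimes>\<^bsub>TSRiordan n\<^esub> truncate_riordan n q"
  by (rule ext)+ (simp add: TSRiordan_def truncate_riordan_def entry_mult[OF p])

lemma trunc_one:
  "truncate_riordan n (\<one>\<^bsub>SRiordan\<^esub> :: 'a::comm_ring_1 fps \<times> 'a fps) = \<one>\<^bsub>TSRiordan n\<^esub>"
  by (rule ext)+ (simp add: TSRiordan_def truncate_riordan_def riordan_entry_def SR_one fps_X_power_nth)

lemma TSR_carrier: "carrier (TSRiordan n) = truncate_riordan n ` carrier SRiordan"
  by (simp add: TSRiordan_def)

lemma TSR_group: "group (TSRiordan n :: (nat \<Rightarrow> nat \<Rightarrow> 'a::comm_ring_1) monoid)"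
proof -
  interpret S: group "SRiordan :: ('a fps \<times> 'a fps) monoid" by (rule SR_group)
  show ?thesis
  proof (rule groupI)
    fix x y :: "nat \<Rightarrow> nat \<Rightarrow> 'a"
    assume "x \<in> carrier (TSRiordan n)" "y \<in> carrier (TSRiordan n)"
    then obtain p q where p: "p \<in> carrier SRiordan" "x = truncate_riordan n p"
      and q: "q \<in> carrier SRiordan" "y = truncate_riordan n q" by (auto simp: TSR_carrier)
    show "x \<otimes>\<^bsub>TSRiordan n\<^esub> y \<in> carrier (TSRiordan n)"
      using p q by (simp add: trunc_mult[symmetric] TSR_carrier)
  next
    show "\<one>\<^bsub>TSRiordan n\<^esub> \<in> carrier (TSRiordan n :: (nat \<Rightarrow> nat \<Rightarrow> 'a) monoid)"
      using trunc_one[of n, where 'a='a] S.one_closed unfolding TSR_carrier by (metis imageI)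
  next
    fix x y z :: "nat \<Rightarrow> nat \<Rightarrow> 'a"
    assume "x \<in> carrier (TSRiordan n)" "y \<in> carrier (TSRiordan n)" "z \<in> carrier (TSRiordan n)"
    then obtain p q r where p: "p \<in> carrier SRiordan" "x = truncate_riordan n p"
      and q: "q \<in> carrier SRiordan" "y = truncate_riordan n q"
      and r: "r \<in> carrier SRiordan" "z = truncate_riordan n r" by (auto simp: TSR_carrier)
    show "x \<otimes>\<^bsub>TSRiordan n\<^esub> y \<otimes>\<^bsub>TSRiordan n\<^esub> z = x \<otimes>\<^bsub>TSRiordan n\<^esub> (y \<otimes>\<^bsub>TSRiordan n\<^esub> z)"
      using p q r by (simp add: trunc_mult[symmetric] S.m_assoc)
  next
    fix x :: "nat \<Rightarrow> nat \<Rightarrow> 'a"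
    assume "x \<in> carrier (TSRiordan n)"
    then obtain p where p: "p \<in> carrier SRiordan" "x = truncate_riordan n p" by (auto simp: TSR_carrier)
    show "\<one>\<^bsub>TSRiordan n\<^esub> \<otimes>\<^bsub>TSRiordan n\<^esub> x = x"
      using p by (simp add: trunc_one[symmetric] trunc_mult[symmetric])
    show "\<exists>y\<in>carrier (TSRiordan n). y \<otimes>\<^bsub>TSRiordan n\<^esub> x = \<one>\<^bsub>TSRiordan n\<^esub>"
    proof (intro bexI)
      show "truncate_riordan n (inv\<^bsub>SRiordan\<^esub> p) \<otimes>\<^bsub>TSRiordan n\<^esub> x = \<one>\<^bsub>TSRiordan n\<^esub>"
        using p by (simp add: trunc_one[symmetric] trunc_mult[symmetric])
      show "truncate_riordan n (inv\<^bsub>SRiordan\<^esub> p) \<in> carrier (TSRiordan n)"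
        using p by (simp add: TSR_carrier)
    qed
  qed
qed

lemma phi_trunc:
  assumes "n \<ge> 1"
  shows "truncate_riordan n p (Suc 0) 0 = fst p $ Suc 0"
  using assms by (simp add: truncate_riordan_def riordan_entry_def)

lemma psi_mult:
  fixes p q :: "'a::comm_ring_1 fps \<times> 'a fps"
  assumes p: "p \<in> carrier SRiordan" and q: "q \<in> carrier SRiordan"
  shows "fst (p \<otimes>\<^bsub>SRiordan\<^esub> q) $ Suc 0 = fst p $ Suc 0 + fst q $ Suc 0"
proof -
  obtain g1 f1 where p1: "p = (g1,f1)" by (cases p)
  obtain g2 f2 where q1: "q = (g2,f2)" by (cases q)
  have c: "g1$0 = 1" "f1$0 = 0" "f1$1 = 1" "g2$0 = 1" using p q by (simp_all add: p1 q1 SR_carrier)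
  show ?thesis unfolding p1 q1 SR_mult
    using c mult_nth1[of g1 "g2 oo f1"] comp_nth1'[of f1 g2] by (simp add: add.commute)
qed



lemma part1:
  fixes \<alpha> :: "'a::comm_ring_1"
  assumes k: "k \<ge> 2"
  shows "a_elem k \<alpha> \<in> derived SRiordan (carrier SRiordan)"
proof -
  interpret S: group "SRiordan :: ('a fps \<times> 'a fps) monoid" by (rule SR_group)
  define f :: "'a fps" where "f = fps_X + fps_const \<alpha> * (fps_X^k + fps_X^(k+1))"
  define x where "x = ((1::'a fps), f)"
  define y where "y = ((1::'a fps) + fps_X, (fps_X::'a fps))"
  have f0: "f$0 = 0" "f$1 = 1" using k by (simp_all add: f_def fps_X_power_nth)
  have x: "x \<in> carrier SRiordan" using f0 by (simp add: x_def SR_carrier)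
  have y: "y \<in> carrier SRiordan" by (simp add: y_def SR_carrier)
  obtain u h where ix: "inv\<^bsub>SRiordan\<^esub> x = (u,h)" by (cases "inv\<^bsub>SRiordan\<^esub> x")
  obtain v w where iy: "inv\<^bsub>SRiordan\<^esub> y = (v,w)" by (cases "inv\<^bsub>SRiordan\<^esub> y")
  have "(u,h) \<otimes>\<^bsub>SRiordan\<^esub> x = \<one>\<^bsub>SRiordan\<^esub>" using x ix by (metis S.l_inv)
  then have u1: "u = 1" by (simp add: x_def SR_mult SR_one)
  have "x \<otimes>\<^bsub>SRiordan\<^esub> (u,h) = \<one>\<^bsub>SRiordan\<^esub>" using x ix by (metis S.r_inv)
  then have hf: "h oo f = fps_X" by (simp add: x_def SR_mult SR_one)
  have "y \<otimes>\<^bsub>SRiordan\<^esub> (v,w) = \<one>\<^bsub>SRiordan\<^esub>" using y iy by (metis S.r_inv)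
  then have vw: "(1 + fps_X) * v = 1" "w = fps_X" by (simp_all add: y_def SR_mult SR_one)
  have e1: "(1 + fps_X) oo f = 1 + f"
    using f0 by (simp add: fps_compose_add_distrib)
  have e2: "1 + f = (1 + fps_X) * (1 + fps_const \<alpha> * fps_X^k)"
    by (simp add: f_def algebra_simps)
  have "x \<otimes>\<^bsub>SRiordan\<^esub> y \<otimes>\<^bsub>SRiordan\<^esub> inv\<^bsub>SRiordan\<^esub> x \<otimes>\<^bsub>SRiordan\<^esub> inv\<^bsub>SRiordan\<^esub> y
        = ((1 + f) * v, fps_X)"
    unfolding ix iy u1 vw(2) by (simp add: x_def y_def SR_mult e1 f0 hf)
  also have "\<dots> = a_elem k \<alpha>"
  proof -
    have "(1 + f) * v = ((1 + fps_X) * v) * (1 + fps_const \<alpha> * fps_X^k)"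
      unfolding e2 by (simp add: ac_simps)
    then show ?thesis by (simp add: vw(1) a_elem_def)
  qed
  finally have "a_elem k \<alpha> \<in> derived_set SRiordan (carrier SRiordan)"
    using x y by blast
  then show ?thesis unfolding derived_def by (rule generate.incl)
qed

lemma part2:
  fixes \<alpha> :: "'a::comm_ring_1"
  assumes n: "n \<ge> 1" and a: "\<alpha> \<noteq> 0"
  shows "truncate_riordan n (a_elem 1 \<alpha>) \<notin> derived (TSRiordan n) (carrier (TSRiordan n))"
proof -
  interpret S: group "SRiordan :: ('a fps \<times> 'a fps) monoid" by (rule SR_group)
  interpret T: group "TSRiordan n :: (nat \<Rightarrow> nat \<Rightarrow> 'a) monoid" by (rule TSR_group)
  have add: "(M \<otimes>\<^bsub>TSRiordan n\<^esub> N) (Suc 0) 0 = M (Suc 0) 0 + N (Suc 0) 0"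
    if M: "M \<in> carrier (TSRiordan n)" and N: "N \<in> carrier (TSRiordan n)"
    for M N :: "nat \<Rightarrow> nat \<Rightarrow> 'a"
  proof -
    obtain p where p: "p \<in> carrier SRiordan" "M = truncate_riordan n p" using M by (auto simp: TSR_carrier)
    obtain q where q: "q \<in> carrier SRiordan" "N = truncate_riordan n q" using N by (auto simp: TSR_carrier)
    have e: "M \<otimes>\<^bsub>TSRiordan n\<^esub> N = truncate_riordan n (p \<otimes>\<^bsub>SRiordan\<^esub> q)"
      unfolding p(2) q(2) by (rule trunc_mult[OF p(1), symmetric])
    show ?thesis unfolding e by (simp only: p(2) q(2) phi_trunc[OF n] psi_mult[OF p(1) q(1)])
  qed
  have one0: "(\<one>\<^bsub>TSRiordan n\<^esub> :: nat \<Rightarrow> nat \<Rightarrow> 'a) (Suc 0) 0 = 0"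
    by (simp add: TSRiordan_def)
  have inv0: "(inv\<^bsub>TSRiordan n\<^esub> M) (Suc 0) 0 = - M (Suc 0) 0" if M: "M \<in> carrier (TSRiordan n)"
    for M :: "nat \<Rightarrow> nat \<Rightarrow> 'a"
  proof -
    have "(inv\<^bsub>TSRiordan n\<^esub> M \<otimes>\<^bsub>TSRiordan n\<^esub> M) (Suc 0) 0 = 0"
      by (simp only: T.l_inv[OF M] one0)
    then have "(inv\<^bsub>TSRiordan n\<^esub> M) (Suc 0) 0 + M (Suc 0) 0 = 0"
      by (simp only: add[OF T.inv_closed[OF M] M])
    then show ?thesis by (simp only: eq_neg_iff_add_eq_0)
  qed
  define K where "K = {M \<in> carrier (TSRiordan n). M (Suc 0) 0 = (0::'a)}"
  have sub: "subgroup K (TSRiordan n)"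
  proof (rule T.subgroupI)
    show "K \<subseteq> carrier (TSRiordan n)" by (auto simp: K_def)
    show "K \<noteq> {}" using one0 T.one_closed unfolding K_def by blast
    show "inv\<^bsub>TSRiordan n\<^esub> a \<in> K" if "a \<in> K" for a
      using that inv0 by (auto simp: K_def)
    show "a \<otimes>\<^bsub>TSRiordan n\<^esub> b \<in> K" if "a \<in> K" "b \<in> K" for a b
      using that add by (auto simp: K_def)
  qed
  have ds: "derived_set (TSRiordan n) (carrier (TSRiordan n)) \<subseteq> K"
  proof (intro subsetI)
    fix z :: "nat \<Rightarrow> nat \<Rightarrow> 'a" assume "z \<in> derived_set (TSRiordan n) (carrier (TSRiordan n))"
    then obtain h1 h2 where h1: "h1 \<in> carrier (TSRiordan n)" and h2: "h2 \<in> carrier (TSRiordan n)"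
      and z: "z = h1 \<otimes>\<^bsub>TSRiordan n\<^esub> h2 \<otimes>\<^bsub>TSRiordan n\<^esub> inv\<^bsub>TSRiordan n\<^esub> h1 \<otimes>\<^bsub>TSRiordan n\<^esub> inv\<^bsub>TSRiordan n\<^esub> h2"
      by blast
    have c1: "h1 \<otimes>\<^bsub>TSRiordan n\<^esub> h2 \<in> carrier (TSRiordan n)" by (rule T.m_closed[OF h1 h2])
    have c2: "h1 \<otimes>\<^bsub>TSRiordan n\<^esub> h2 \<otimes>\<^bsub>TSRiordan n\<^esub> inv\<^bsub>TSRiordan n\<^esub> h1 \<in> carrier (TSRiordan n)"
      by (rule T.m_closed[OF c1 T.inv_closed[OF h1]])
    have zc: "z \<in> carrier (TSRiordan n)" unfolding z by (rule T.m_closed[OF c2 T.inv_closed[OF h2]])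
    have "z (Suc 0) 0 = h1 (Suc 0) 0 + h2 (Suc 0) 0 + - h1 (Suc 0) 0 + - h2 (Suc 0) 0"
      unfolding z by (simp only: add[OF c2 T.inv_closed[OF h2]] add[OF c1 T.inv_closed[OF h1]]
          add[OF h1 h2] inv0[OF h1] inv0[OF h2])
    then have "z (Suc 0) 0 = 0" by simp
    then show "z \<in> K" using zc by (simp add: K_def)
  qed
  have "derived (TSRiordan n) (carrier (TSRiordan n)) \<subseteq> K"
    unfolding derived_def by (rule T.generate_subgroup_incl[OF ds sub])
  moreover have "truncate_riordan n (a_elem 1 \<alpha>) (Suc 0) 0 = \<alpha>"
    by (simp add: phi_trunc[OF n] a_elem_def)
  ultimately show ?thesis using a by (auto simp: K_def)
qed

theorem lemma1:
  shows "(\<forall>(\<alpha>::'a::comm_ring_1) k. k \<ge> 2 \<longrightarrow>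
            a_elem k \<alpha> \<in> derived SRiordan (carrier SRiordan))
       \<and> (\<forall>(n::nat) (\<alpha>::'a). n \<ge> 1 \<and> \<alpha> \<noteq> 0 \<longrightarrow>
            truncate_riordan n (a_elem 1 \<alpha>) \<notin> derived (TSRiordan n) (carrier (TSRiordan n)))"
proof (intro conjI allI impI)
  fix \<alpha> :: 'a and k :: nat
  assume "k \<ge> 2"
  then show "a_elem k \<alpha> \<in> derived SRiordan (carrier SRiordan)" by (rule part1)
next
  fix n :: nat and \<alpha> :: 'a
  assume h: "n \<ge> 1 \<and> \<alpha> \<noteq> 0"
  show "truncate_riordan n (a_elem 1 \<alpha>) \<notin> derived (TSRiordan n) (carrier (TSRiordan n))"
    using h by (intro part2) auto
qed

end
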